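(* Consider the lattice Boltzmann scheme and initialisation $w$ described in the context, and let $H\in\mathbb{N}^*$. Assume that (i) the Fourier symbol of $w_1$ satisfies $\hat w_1(\xi\Delta x)=1+O(|\xi\Delta x|^{H+1})$ as $|\xi\Delta x|\to0$ (equivalently $\omega_1^{(0)}=1$ and $\omega_1^{(h)}=0$ for $h\in\{1,\dots,H\}$); and (ii) for every $n\in\{1,\dots,Q\}$ the modified equation of the $n$-th starting scheme matches that of the bulk finite difference scheme up to order $H$, i.e. $\log\hat g_{[n]}(\xi\Delta x)-n\log\hat g_1(\xi\Delta x)=O(|\xi\Delta x|^{H+1})$. Then for every $n>Q$ the modified equation of the $n$-th starting scheme also matches that of the bulk finite difference scheme up to order $H$, i.e. $\hat g_{[n]}(\xi\Delta x)=\hat g_1(\xi\Delta x)^n+O(|\xi\Delta x|^{H+1})$.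
   Context: Fix $d\ge1$, $q\ge1$, velocities $c_1,\dots,c_q\in\mathbb{Z}^d$, invertible $M$, $S=\mathrm{diag}(s_1,\dots,s_q)$ with $s_i\in(0,2]$ for $i\ge2$, $\epsilon\in\mathbb{R}^q$, $\epsilon_1=1$; $K=I-S(I-\epsilon e_1^T)$; acoustic scaling $\Delta t=\Delta x/\lambda$. Shifts $(x_\ell\phi)(x)=\phi(x-\Delta xe_\ell)$; $T=M\mathrm{diag}(x^{c_1},\dots,x^{c_q})M^{-1}$, $E=TK$. $Q$ is the number of $i\in\{2,\dots,q\}$ with $s_i\ne1$. The initialisation is $m(0,x)=w\,m_1^\circ(x)$ with $w$ a vector of Laurent polynomials in the shifts, $w_1$ having asymptotic expansion $\omega_1^{(0)}+\sum_{h\ge1}\Delta x^h\omega_1^{(h)}$ on smooth functions. Fourier symbols: for a Laurent polynomial operator $\mathsf{d}$ in the shifts, $\hat{\mathsf d}(\xi\Delta x)$ is obtained by substituting $x_\ell\mapsto e^{-i\xi_\ell\Delta x}$, $\xi\in\mathbb{R}^d$. The bulk finite difference scheme $z^{Q+1-q}\det(zI-E)m_1=0$ has amplification polynomial $\hat\Phi(z,\xi\Delta x)=z^{Q+1-q}\det(zI-\hat E(\xi\Delta x))$; $\hat g_1(\xi\Delta x)$ denotes its root with $\hat g_1(\xi\Delta x)=1+O(|\xi\Delta x|)$ as $|\xi\Delta x|\to0$ (the consistency root), and the modified equation of the bulk scheme is $\partial_t=\frac{\lambda}{\Delta x}\log\hat g_1(\xi\Delta x)$. For $n\in\mathbb{N}^*$,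 $\hat g_{[n]}(\xi\Delta x)=(\hat E(\xi\Delta x)^n\hat w(\xi\Delta x))_1$ is the symbol of the $n$-th starting scheme $m_1(n\Delta t,\cdot)=(E^nw)_1m_1^\circ$, whose modified equation is $\partial_t=\frac{\lambda}{n\Delta x}\log\hat g_{[n]}(\xi\Delta x)$ as $|\xi\Delta x|\to0$. *)

theory Defs
  imports "HOL-Analysis.Analysis" "HOL-Library.Landau_Symbols" "Jordan_Normal_Form.Determinant"
begin

text \<open>Lattice Boltzmann scheme, Fourier side. Indices of the q moments are 0..q-1,
  index 0 playing the role of index 1 (the conserved moment) in the paper.\<close>

text \<open>Fourier symbol of the shift monomial x^c (c in Z^d): x_l maps to exp(-i theta_l).\<close>
definition shift_symbol :: "int^'d \<Rightarrow> real^'d \<Rightarrow> complex" where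
  "shift_symbol c \<theta> = cis (- (\<Sum>l\<in>UNIV. of_int (c $ l) * \<theta> $ l))"

definition cmat :: "real mat \<Rightarrow> complex mat" where
  "cmat A = map_mat complex_of_real A"

definition minv :: "real mat \<Rightarrow> real mat" where
  "minv A = (SOME B. inverts_mat A B \<and> inverts_mat B A)"

text \<open>Collision matrix K = I - S (I - epsilon e_1^T), S = diag(s).\<close>
definition Kmat :: "nat \<Rightarrow> (nat \<Rightarrow> real) \<Rightarrow> (nat \<Rightarrow> real) \<Rightarrow> real mat" where
  "Kmat q s \<epsilon> = mat q q (\<lambda>(i,j). (if i = j then 1 else 0)
       - s i * ((if i = j then 1 else 0) - \<epsilon> i * (if j = 0 then 1 else 0)))"

definition Ehat :: "nat \<Rightarrow> (nat \<Rightarrow> int^'d) \<Rightarrow> real mat \<Rightarrow> (nat \<Rightarrow> real) \<Rightarrow> (nat \<Rightarrow> real)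
    \<Rightarrow> real^'d \<Rightarrow> complex mat" where
  "Ehat q c M s \<epsilon> \<theta> =
     cmat M * mat_diag q (\<lambda>i. shift_symbol (c i) \<theta>) * cmat (minv M) * cmat (Kmat q s \<epsilon>)"

text \<open>Q = number of i in 2..q (here 1..q-1) with s_i \<noteq> 1.\<close>
definition Qnum :: "nat \<Rightarrow> (nat \<Rightarrow> real) \<Rightarrow> nat" where
  "Qnum q s = card {i. 1 \<le> i \<and> i < q \<and> s i \<noteq> 1}"

definition Phihat :: "nat \<Rightarrow> (nat \<Rightarrow> int^'d) \<Rightarrow> real mat \<Rightarrow> (nat \<Rightarrow> real) \<Rightarrow> (nat \<Rightarrow> real)
    \<Rightarrow> complex \<Rightarrow> real^'d \<Rightarrow> complex" where
  "Phihat q c M s \<epsilon> z \<theta> =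
     z powi (int (Qnum q s) + 1 - int q) * det (z \<cdot>\<^sub>m 1\<^sub>m q - Ehat q c M s \<epsilon> \<theta>)"

text \<open>Laurent polynomials in the shifts: finitely supported coefficient maps
  int^d \<Rightarrow> real; their Fourier symbol.\<close>
definition laurent_symbol :: "(int^'d \<Rightarrow> real) \<Rightarrow> real^'d \<Rightarrow> complex" where
  "laurent_symbol p \<theta> = (\<Sum>k\<in>{k. p k \<noteq> 0}. complex_of_real (p k) * shift_symbol k \<theta>)"

definition what :: "nat \<Rightarrow> (nat \<Rightarrow> int^'d \<Rightarrow> real) \<Rightarrow> real^'d \<Rightarrow> complex vec" where
  "what q w \<theta> = vec q (\<lambda>i. laurent_symbol (w i) \<theta>)"

definition gstart :: "nat \<Rightarrow> (nat \<Rightarrow> int^'d) \<Rightarrow> real mat \<Rightarrow> (nat \<Rightarrow> real) \<Rightarrow> (nat \<Rightarrow> real)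
    \<Rightarrow> (nat \<Rightarrow> int^'d \<Rightarrow> real) \<Rightarrow> nat \<Rightarrow> real^'d \<Rightarrow> complex" where
  "gstart q c M s \<epsilon> w n \<theta> = ((Ehat q c M s \<epsilon> \<theta> ^\<^sub>m n) *\<^sub>v what q w \<theta>) $ 0"

end

theory Submission imports Defs "Jordan_Normal_Form.Schur_Decomposition" "HOL-Complex_Analysis.Weierstrass_Factorization" begin


definition Dop :: "complex \<Rightarrow> (nat \<Rightarrow> complex) \<Rightarrow> nat \<Rightarrow> complex" where
  "Dop a f = (\<lambda>n. f (Suc n) - a * f n)"

definition Dl :: "complex list \<Rightarrow> (nat \<Rightarrow> complex) \<Rightarrow> nat \<Rightarrow> complex" where
  "Dl ls f = foldr Dop ls f"

lemma Dl_Nil[simp]: "Dl [] f = f" by (simp add: Dl_def)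
lemma Dl_Cons[simp]: "Dl (a#ls) f = Dop a (Dl ls f)" by (simp add: Dl_def)
lemma Dl_append: "Dl (xs@ys) f = Dl xs (Dl ys f)" by (simp add: Dl_def)
lemma Dop_comm: "Dop a (Dop b f) = Dop b (Dop a f)"
  by (auto simp: Dop_def fun_eq_iff algebra_simps)
lemma Dop_Dl: "Dop a (Dl ls f) = Dl ls (Dop a f)"
  by (induct ls) (simp_all add: Dop_comm)
lemma Dl_zero[simp]: "Dl ls (\<lambda>_. 0) = (\<lambda>_. 0)"
  by (induct ls) (simp_all add: Dop_def)
lemma Dl_sum: "Dl ls (\<lambda>n. \<Sum>i\<in>I. c i * f i n) = (\<lambda>n. \<Sum>i\<in>I. c i * Dl ls (f i) n)"
  by (induct ls) (simp_all add: Dop_def fun_eq_iff sum_subtractf sum_distrib_left algebra_simps)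
lemma Dl_diff: "Dl ls (\<lambda>n. f n - g n) = (\<lambda>n. Dl ls f n - Dl ls g n)"
proof (induct ls)
  case (Cons a ls)
  have "Dl (a#ls) (\<lambda>n. f n - g n) = Dop a (\<lambda>n. Dl ls f n - Dl ls g n)" using Cons by simp
  then show ?case by (simp add: Dop_def fun_eq_iff algebra_simps)
qed simp
lemma Dop_geom: "Dop a (\<lambda>n. a ^ n) = (\<lambda>_. 0)"
  by (simp add: Dop_def fun_eq_iff)

lemma pow_mat_comm: "A \<in> carrier_mat n n \<Longrightarrow> A ^\<^sub>m k * A = A * A ^\<^sub>m k"
proof (induct k)
  case 0 then show ?case by simp
next
  case (Suc k)
  have "A ^\<^sub>m Suc k * A = (A ^\<^sub>m k * A) * A" by simp
  also have "\<dots> = (A * A ^\<^sub>m k) * A" using Suc by simp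
  also have "\<dots> = A * (A ^\<^sub>m k * A)" by (rule assoc_mult_mat[of _ n n _ n _ n]) (use Suc.prems in auto)
  finally show ?case by simp
qed

lemma pow_mat_Suc_vec:
  assumes "A \<in> carrier_mat n n" "y \<in> carrier_vec n"
  shows "A ^\<^sub>m Suc k *\<^sub>v y = A *\<^sub>v (A ^\<^sub>m k *\<^sub>v y)"
proof -
  have "A ^\<^sub>m Suc k *\<^sub>v y = (A * A ^\<^sub>m k) *\<^sub>v y" using pow_mat_comm[OF assms(1)] by simp
  also have "\<dots> = A *\<^sub>v (A ^\<^sub>m k *\<^sub>v y)" using assms by (intro assoc_mult_mat_vec) auto
  finally show ?thesis .
qed

lemma mat_vec_sum:
  assumes "A \<in> carrier_mat m n" "z \<in> carrier_vec n" "i < m"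
  shows "(A *\<^sub>v z) $ i = (\<Sum>j<n. A $$ (i,j) * z $ j)"
  using assms by (auto simp: scalar_prod_def atLeast0LessThan intro!: sum.cong)

lemma tri_annih:
  fixes U :: "complex mat"
  assumes U: "U \<in> carrier_mat m m" and ut: "upper_triangular U" and y: "y \<in> carrier_vec m"
  shows "i < m \<Longrightarrow> Dl (map (\<lambda>j. U$$(j,j)) [i..<m]) (\<lambda>n. (U ^\<^sub>m n *\<^sub>v y) $ i) = (\<lambda>_. 0)"
proof (induct "m - i" arbitrary: i rule: less_induct)
  case (less i)
  define d where "d = (\<lambda>j. U$$(j,j))"
  define Y where "Y = (\<lambda>j n. (U ^\<^sub>m n *\<^sub>v y) $ j)"
  have step: "Dop (d i) (Y i) = (\<lambda>n. \<Sum>j\<in>{Suc i..<m}. U$$(i,j) * Y j n)"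
  proof
    fix n
    have yv: "U ^\<^sub>m n *\<^sub>v y \<in> carrier_vec m" using U y by (metis mult_mat_vec_carrier pow_carrier_mat)
    have "Y i (Suc n) = (\<Sum>j<m. U $$ (i,j) * Y j n)"
      unfolding Y_def pow_mat_Suc_vec[OF U y] using mat_vec_sum[OF U yv less.prems] by simp
    also have "\<dots> = (\<Sum>j\<in>{0..<i} \<union> ({i} \<union> {Suc i..<m}). U $$ (i,j) * Y j n)"
      using less.prems by (intro sum.cong) auto
    also have "\<dots> = (\<Sum>j\<in>{0..<i}. U $$ (i,j) * Y j n) + (U$$(i,i) * Y i n
          + (\<Sum>j\<in>{Suc i..<m}. U $$ (i,j) * Y j n))"
      by (subst sum.union_disjoint; simp)+
    also have "(\<Sum>j\<in>{0..<i}. U $$ (i,j) * Y j n) = 0"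
      using ut U less.prems by (intro sum.neutral) auto
    finally show "Dop (d i) (Y i) n = (\<Sum>j\<in>{Suc i..<m}. U$$(i,j) * Y j n)"
      by (simp add: Dop_def d_def)
  qed
  have split: "[i..<m] = i # [Suc i..<m]" using less.prems by (simp add: upt_rec)
  have "Dl (map d [i..<m]) (Y i) = Dl (map d [Suc i..<m]) (Dop (d i) (Y i))"
    unfolding split by (simp add: Dop_Dl)
  also have "\<dots> = (\<lambda>n. \<Sum>j\<in>{Suc i..<m}. U$$(i,j) * Dl (map d [Suc i..<m]) (Y j) n)"
    unfolding step by (rule Dl_sum)
  also have "\<dots> = (\<lambda>_. 0)"
  proof (intro ext sum.neutral ballI)
    fix n j assume j: "j \<in> {Suc i..<m}"
    have "[Suc i..<m] = [Suc i..<j] @ [j..<m]" using j upt_add_eq_append[of "Suc i" j "m - j"]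
      by simp
    then have "Dl (map d [Suc i..<m]) (Y j) = Dl (map d [Suc i..<j]) (Dl (map d [j..<m]) (Y j))"
      by (simp add: Dl_append)
    also have "Dl (map d [j..<m]) (Y j) = (\<lambda>_. 0)"
      using less.hyps[of j] j unfolding d_def Y_def by auto
    finally show "U $$ (i, j) * Dl (map d [Suc i..<m]) (Y j) n = 0" by simp
  qed
  finally show ?case unfolding d_def Y_def .
qed

lemma tri_annih_full:
  fixes U :: "complex mat"
  assumes U: "U \<in> carrier_mat m m" and ut: "upper_triangular U" and y: "y \<in> carrier_vec m"
    and i: "i < m"
  shows "Dl (diag_mat U) (\<lambda>n. (U ^\<^sub>m n *\<^sub>v y) $ i) = (\<lambda>_. 0)"
proof -
  have "[0..<m] = [0..<i] @ [i..<m]" using i upt_add_eq_append[of 0 i "m - i"]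
    by simp
  then have "diag_mat U = map (\<lambda>j. U$$(j,j)) [0..<i] @ map (\<lambda>j. U$$(j,j)) [i..<m]"
    using U by (simp add: diag_mat_def)
  then show ?thesis using tri_annih[OF U ut y i] by (simp add: Dl_append)
qed

lemma annih_general:
  fixes A :: "complex mat"
  assumes A: "A \<in> carrier_mat m m" and cp: "char_poly A = (\<Prod>a\<leftarrow>es. [:- a, 1:])"
    and x: "x \<in> carrier_vec m" and k: "k < m"
  shows "Dl es (\<lambda>n. (A ^\<^sub>m n *\<^sub>v x) $ k) = (\<lambda>_. 0)"
proof -
  obtain B P Q where sd: "schur_decomposition A es = (B,P,Q)" by (cases "schur_decomposition A es") auto
  from schur_decomposition[OF A cp sd]
  have sim: "similar_mat_wit A B P Q" and ut: "upper_triangular B" and dg: "diag_mat B = es" by auto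
  from sim A have B: "B \<in> carrier_mat m m" and P: "P \<in> carrier_mat m m" and Q: "Q \<in> carrier_mat m m"
    unfolding similar_mat_wit_def Let_def by auto
  define y where "y = Q *\<^sub>v x"
  have y: "y \<in> carrier_vec m" using Q x by (simp add: y_def)
  have "\<And>n. (A ^\<^sub>m n *\<^sub>v x) $ k = (\<Sum>i<m. P $$ (k,i) * (B ^\<^sub>m n *\<^sub>v y) $ i)"
  proof -
    fix n
    have "A ^\<^sub>m n = P * B ^\<^sub>m n * Q" by (rule similar_mat_wit_pow_id[OF sim])
    have Bn: "B ^\<^sub>m n \<in> carrier_mat m m" using B by simp
    have "(P * B ^\<^sub>m n * Q) *\<^sub>v x = (P * B ^\<^sub>m n) *\<^sub>v (Q *\<^sub>v x)"
      by (rule assoc_mult_mat_vec[of _ m m _ m]) (use P Bn Q x in auto)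
    also have "\<dots> = P *\<^sub>v (B ^\<^sub>m n *\<^sub>v (Q *\<^sub>v x))"
      by (rule assoc_mult_mat_vec[of _ m m _ m]) (use P Bn Q x in auto)
    finally have "A ^\<^sub>m n *\<^sub>v x = P *\<^sub>v (B ^\<^sub>m n *\<^sub>v y)"
      using \<open>A ^\<^sub>m n = P * B ^\<^sub>m n * Q\<close> by (simp add: y_def)
    then show "(A ^\<^sub>m n *\<^sub>v x) $ k = (\<Sum>i<m. P $$ (k,i) * (B ^\<^sub>m n *\<^sub>v y) $ i)"
      using mat_vec_sum[OF P _ k, of "B ^\<^sub>m n *\<^sub>v y"] B y
      by (metis mult_mat_vec_carrier pow_carrier_mat)
  qed
  then have eq: "(\<lambda>n. (A ^\<^sub>m n *\<^sub>v x) $ k) = (\<lambda>n. \<Sum>i\<in>{..<m}. P $$ (k,i) * (B ^\<^sub>m n *\<^sub>v y) $ i)"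
    by auto
  show ?thesis unfolding eq Dl_sum
    using tri_annih_full[OF B ut y] dg by (intro ext sum.neutral) auto
qed

lemma eigen_bound:
  fixes A :: "complex mat"
  assumes A: "A \<in> carrier_mat m m" and ev: "eigenvalue A e"
    and b: "\<And>i j. i < m \<Longrightarrow> j < m \<Longrightarrow> norm (A $$ (i,j)) \<le> b"
  shows "norm e \<le> real m * b"
proof -
  from ev obtain v where v: "v \<in> carrier_vec m" "v \<noteq> 0\<^sub>v m" "A *\<^sub>v v = e \<cdot>\<^sub>v v"
    unfolding eigenvalue_def eigenvector_def using A by auto
  have "\<exists>j<m. v $ j \<noteq> 0"
  proof (rule ccontr)
    assume "\<not> ?thesis"
    then have "v = 0\<^sub>v m" using v(1) by (intro eq_vecI) auto
    with v(2) show False by simp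
  qed
  then obtain j0 where j0: "j0 < m" "v $ j0 \<noteq> 0" by blast
  then have m0: "m > 0" by simp
  define S where "S = (\<lambda>j. norm (v $ j)) ` {..<m}"
  have fin: "finite S" "S \<noteq> {}" using m0 by (auto simp: S_def)
  obtain i where i: "i < m" "norm (v $ i) = Max S"
    using Max_in[OF fin] unfolding S_def by auto
  have maxi: "\<And>j. j < m \<Longrightarrow> norm (v $ j) \<le> norm (v $ i)"
    using i fin by (simp add: S_def)
  have b0: "0 \<le> b" using b[OF i(1) i(1)] norm_ge_zero order_trans by blast
  have pos: "norm (v $ i) > 0" using maxi[OF j0(1)] j0(2) by auto
  have "e * v $ i = (\<Sum>j<m. A $$ (i,j) * v $ j)"
    using mat_vec_sum[OF A v(1) i(1)] v(3) i(1) v(1) by simp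
  then have "norm e * norm (v $ i) = norm (\<Sum>j<m. A $$ (i,j) * v $ j)" by (metis norm_mult)
  also have "\<dots> \<le> (\<Sum>j<m. norm (A $$ (i,j) * v $ j))" by (rule norm_sum)
  also have "\<dots> \<le> (\<Sum>j<m. b * norm (v $ i))"
    by (intro sum_mono) (auto simp: norm_mult intro!: mult_mono b i maxi b0)
  also have "\<dots> = real m * b * norm (v $ i)" by simp
  finally show ?thesis using pos by simp
qed

lemma char_poly_with_ev:
  fixes A :: "complex mat"
  assumes A: "A \<in> carrier_mat m m" and ev: "eigenvalue A g"
  shows "\<exists>es. char_poly A = (\<Prod>a\<leftarrow>g # es. [:- a, 1:]) \<and> length es = m - 1 \<and> (\<forall>e\<in>set es. eigenvalue A e)"
proof -
  obtain as where cp: "char_poly A = (\<Prod>a\<leftarrow>as. [:- a, 1:])" and len: "length as = m"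
    using char_poly_factorized[OF A] by blast
  have "poly (char_poly A) g = 0" using eigenvalue_root_char_poly[OF A] ev by simp
  then have "g \<in> set as" unfolding cp by (auto simp: poly_prod_list prod_list_zero_iff)
  then have cp2: "char_poly A = (\<Prod>a\<leftarrow>g # remove1 g as. [:- a, 1:])"
    unfolding cp by (simp add: prod_list_map_remove1)
  have "\<forall>e\<in>set (remove1 g as). eigenvalue A e"
  proof
    fix e assume "e \<in> set (remove1 g as)"
    then have "e \<in> set as" by (meson notin_set_remove1)
    then have "poly (char_poly A) e = 0" unfolding cp by (auto simp: poly_prod_list prod_list_zero_iff)
    then show "eigenvalue A e" using eigenvalue_root_char_poly[OF A] by simp
  qed
  moreover have "length (remove1 g as) = m - 1" using len \<open>g \<in> set as\<close> by (simp add: length_remove1)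
  ultimately show ?thesis using cp2 by blast
qed



definition Sm :: "'a filter \<Rightarrow> ('a \<Rightarrow> real) \<Rightarrow> ('a \<Rightarrow> complex) \<Rightarrow> bool" where
  "Sm F r f \<longleftrightarrow> (\<exists>C. eventually (\<lambda>x. norm (f x) \<le> C * r x) F)"

definition Bdd :: "'a filter \<Rightarrow> ('a \<Rightarrow> complex) \<Rightarrow> bool" where
  "Bdd F l \<longleftrightarrow> (\<exists>B. eventually (\<lambda>x. norm (l x) \<le> B) F)"

lemma Sm_iff_bigo:
  assumes r: "\<And>x. r x \<ge> 0"
  shows "f \<in> O[F](\<lambda>x. complex_of_real (r x)) \<longleftrightarrow> Sm F r f"
proof
  assume "f \<in> O[F](\<lambda>x. complex_of_real (r x))"
  then obtain c where "c > 0" "eventually (\<lambda>x. norm (f x) \<le> c * norm (complex_of_real (r x))) F"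
    by (rule landau_o.bigE)
  then show "Sm F r f" unfolding Sm_def using r
    by (intro exI[of _ c]) (auto elim!: eventually_mono)
next
  assume "Sm F r f"
  then obtain C where "eventually (\<lambda>x. norm (f x) \<le> C * r x) F" by (auto simp: Sm_def)
  then show "f \<in> O[F](\<lambda>x. complex_of_real (r x))" using r
    by (intro bigoI[of _ C]) (auto elim!: eventually_mono)
qed

lemma Sm_add:
  assumes "Sm F r f" "Sm F r g" shows "Sm F r (\<lambda>x. f x + g x)"
proof -
  from assms obtain C1 C2 where "eventually (\<lambda>x. norm (f x) \<le> C1 * r x) F"
    "eventually (\<lambda>x. norm (g x) \<le> C2 * r x) F" by (auto simp: Sm_def)
  then have "eventually (\<lambda>x. norm (f x + g x) \<le> (C1 + C2) * r x) F"
  proof eventually_elim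
    case (elim x)
    have "norm (f x + g x) \<le> norm (f x) + norm (g x)" by (rule norm_triangle_ineq)
    with elim show ?case by (simp add: algebra_simps)
  qed
  then show ?thesis by (auto simp: Sm_def)
qed

lemma Sm_diff:
  assumes "Sm F r f" "Sm F r g" shows "Sm F r (\<lambda>x. f x - g x)"
proof -
  from assms obtain C1 C2 where "eventually (\<lambda>x. norm (f x) \<le> C1 * r x) F"
    "eventually (\<lambda>x. norm (g x) \<le> C2 * r x) F" by (auto simp: Sm_def)
  then have "eventually (\<lambda>x. norm (f x - g x) \<le> (C1 + C2) * r x) F"
  proof eventually_elim
    case (elim x)
    have "norm (f x - g x) \<le> norm (f x) + norm (g x)" by (rule norm_triangle_ineq4)
    with elim show ?case by (simp add: algebra_simps)
  qed
  then show ?thesis by (auto simp: Sm_def)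
qed

lemma Sm_mult:
  assumes "Bdd F l" "Sm F r f" shows "Sm F r (\<lambda>x. l x * f x)"
proof -
  from assms obtain B C where "eventually (\<lambda>x. norm (l x) \<le> B) F"
    "eventually (\<lambda>x. norm (f x) \<le> C * r x) F" by (auto simp: Sm_def Bdd_def)
  then have "eventually (\<lambda>x. norm (l x * f x) \<le> (max B 0 * C) * r x) F"
  proof eventually_elim
    case (elim x)
    have "norm (l x) * norm (f x) \<le> max B 0 * (C * r x)"
      using elim by (intro mult_mono) auto
    then show ?case by (simp add: norm_mult algebra_simps)
  qed
  then show ?thesis by (auto simp: Sm_def)
qed

lemma Sm_cong:
  assumes "eventually (\<lambda>x. f x = g x) F" "Sm F r f" shows "Sm F r g"
proof -
  from assms(2) obtain C where "eventually (\<lambda>x. norm (f x) \<le> C * r x) F" by (auto simp: Sm_def)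
  with assms(1) have "eventually (\<lambda>x. norm (g x) \<le> C * r x) F"
    by eventually_elim simp
  then show ?thesis by (auto simp: Sm_def)
qed

lemma Sm_tendsto:
  assumes r: "\<And>x. r x \<ge> 0" and S: "Sm F r f" and lim: "(r \<longlongrightarrow> 0) F"
  shows "(f \<longlongrightarrow> 0) F"
proof -
  from S obtain C where C: "eventually (\<lambda>x. norm (f x) \<le> C * r x) F" by (auto simp: Sm_def)
  have "eventually (\<lambda>x. norm (f x) \<le> norm (r x) * max C 0) F"
    using C
  proof eventually_elim
    case (elim x)
    have "C * r x \<le> max C 0 * r x" using r[of x] by (intro mult_right_mono) auto
    with elim r[of x] show ?case by (simp add: mult.commute)
  qed
  then show ?thesis by (rule tendsto_0_le[OF lim])
qed

definition DF :: "('a \<Rightarrow> complex) list \<Rightarrow> ('a \<Rightarrow> nat \<Rightarrow> complex) \<Rightarrow> 'a \<Rightarrow> nat \<Rightarrow> complex" where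
  "DF ls f = (\<lambda>x. Dl (map (\<lambda>l. l x) ls) (f x))"

lemma DF_Nil[simp]: "DF [] f = f" by (simp add: DF_def)
lemma DF_Cons: "DF (l#ls) f x n = DF ls f x (Suc n) - l x * DF ls f x n"
  by (simp add: DF_def Dop_def)

lemma DF_forward:
  "(\<forall>l\<in>set ls. Bdd F l) \<Longrightarrow> (\<forall>n\<le>N + length ls. Sm F r (\<lambda>x. f x n)) \<Longrightarrow> n \<le> N
   \<Longrightarrow> Sm F r (\<lambda>x. DF ls f x n)"
proof (induct ls arbitrary: N n)
  case Nil then show ?case by simp
next
  case (Cons l ls)
  have IH: "Sm F r (\<lambda>x. DF ls f x k)" if "k \<le> Suc N" for k
    using Cons.hyps[of "Suc N" k] Cons.prems that by auto
  have "Sm F r (\<lambda>x. DF ls f x (Suc n) - l x * DF ls f x n)"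
    using Cons.prems by (intro Sm_diff IH Sm_mult) auto
  then show ?case by (simp add: DF_Cons)
qed

lemma DF_backward:
  "(\<forall>l\<in>set ls. Bdd F l) \<Longrightarrow> (\<forall>n. Sm F r (\<lambda>x. DF ls f x n)) \<Longrightarrow> (\<forall>n<length ls. Sm F r (\<lambda>x. f x n))
   \<Longrightarrow> Sm F r (\<lambda>x. f x n)"
proof (induct ls arbitrary: n)
  case Nil then show ?case by simp
next
  case (Cons l ls)
  have h0: "Sm F r (\<lambda>x. DF ls f x 0)"
    using Cons.prems by (intro DF_forward[of _ _ 0]) auto
  have hall: "Sm F r (\<lambda>x. DF ls f x k)" for k
  proof (induct k)
    case 0 then show ?case by (rule h0)
  next
    case (Suc k)
    have "Sm F r (\<lambda>x. DF (l#ls) f x k + l x * DF ls f x k)"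
      using Cons.prems Suc by (intro Sm_add Sm_mult) auto
    then show ?case by (simp add: DF_Cons)
  qed
  show ?case using Cons.hyps Cons.prems hall by auto
qed



lemma cmat_dims[simp]: "dim_row (cmat A) = dim_row A" "dim_col (cmat A) = dim_col A"
  by (auto simp: cmat_def)

lemma cmat_carrier[simp]: "A \<in> carrier_mat nr nc \<Longrightarrow> cmat A \<in> carrier_mat nr nc"
  by (auto simp: cmat_def)

lemma cmat_index[simp]: "i < dim_row A \<Longrightarrow> j < dim_col A \<Longrightarrow> cmat A $$ (i,j) = of_real (A $$ (i,j))"
  by (auto simp: cmat_def)

lemma mat_mult_sum:
  assumes "A \<in> carrier_mat nr n" "B \<in> carrier_mat n nc" "i < nr" "j < nc"
  shows "(A * B) $$ (i,j) = (\<Sum>k<n. A $$ (i,k) * B $$ (k,j))"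
  using assms by (auto simp: scalar_prod_def atLeast0LessThan intro!: sum.cong)

lemma cmat_mult:
  assumes A: "A \<in> carrier_mat nr n" and B: "B \<in> carrier_mat n nc"
  shows "cmat (A * B) = cmat A * cmat B"
proof (rule eq_matI)
  fix i j assume ij: "i < dim_row (cmat A * cmat B)" "j < dim_col (cmat A * cmat B)"
  then have i: "i < nr" and j: "j < nc" using A B by auto
  have "cmat (A * B) $$ (i,j) = of_real (\<Sum>k<n. A $$ (i,k) * B $$ (k,j))"
    using mat_mult_sum[OF A B i j] A B i j by simp
  also have "\<dots> = (\<Sum>k<n. cmat A $$ (i,k) * cmat B $$ (k,j))"
    using A B i j by (simp add: of_real_sum)
  also have "\<dots> = (cmat A * cmat B) $$ (i,j)"
    using mat_mult_sum[OF cmat_carrier[OF A] cmat_carrier[OF B] i j] by simp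
  finally show "cmat (A * B) $$ (i,j) = (cmat A * cmat B) $$ (i,j)" .
qed (use A B in auto)

lemma cmat_one[simp]: "cmat (1\<^sub>m n) = 1\<^sub>m n"
  by (rule eq_matI) (auto simp: cmat_def)

lemma minv_props:
  assumes M: "M \<in> carrier_mat q q" and inv: "invertible_mat M"
  shows "minv M \<in> carrier_mat q q" "M * minv M = 1\<^sub>m q"
proof -
  have ex: "\<exists>B. inverts_mat M B \<and> inverts_mat B M" using inv unfolding invertible_mat_def by auto
  have h: "inverts_mat M (minv M) \<and> inverts_mat (minv M) M"
    unfolding minv_def by (rule someI_ex[OF ex])
  then have 1: "M * minv M = 1\<^sub>m q" and 2: "minv M * M = 1\<^sub>m (dim_row (minv M))"
    using M unfolding inverts_mat_def by auto
  have "dim_col (minv M) = q" using arg_cong[OF 1, of dim_col] by simp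
  moreover have "dim_row (minv M) = q" using arg_cong[OF 2, of dim_col] M by simp
  ultimately show "minv M \<in> carrier_mat q q" by auto
  show "M * minv M = 1\<^sub>m q" by (rule 1)
qed

lemma Kmat_carrier[simp]: "Kmat q s \<epsilon> \<in> carrier_mat q q"
  by (simp add: Kmat_def)

lemma Kmat_dims[simp]: "dim_row (Kmat q s \<epsilon>) = q" "dim_col (Kmat q s \<epsilon>) = q"
  by (simp_all add: Kmat_def)

lemma Kmat_index: "i < q \<Longrightarrow> j < q \<Longrightarrow> Kmat q s \<epsilon> $$ (i,j) = (if i = j then 1 else 0)
       - s i * ((if i = j then 1 else 0) - \<epsilon> i * (if j = 0 then 1 else 0))"
  by (simp add: Kmat_def)

lemma Kmat_row0: "\<epsilon> 0 = 1 \<Longrightarrow> 0 < q \<Longrightarrow> j < q \<Longrightarrow> Kmat q s \<epsilon> $$ (0,j) = (if j = 0 then 1 else 0)"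
  by (simp add: Kmat_index)

lemma Kmat_zero_col: "i < q \<Longrightarrow> j < q \<Longrightarrow> j \<noteq> 0 \<Longrightarrow> s j = 1 \<Longrightarrow> Kmat q s \<epsilon> $$ (i,j) = 0"
  by (simp add: Kmat_index)

lemma Ehat_carrier:
  assumes M: "M \<in> carrier_mat q q" and inv: "invertible_mat M"
  shows "Ehat q c M s \<epsilon> \<theta> \<in> carrier_mat q q"
  using minv_props[OF M inv] M unfolding Ehat_def
  by (intro mult_carrier_mat[of _ q q] cmat_carrier mat_diag_dim) auto

lemma Ehat_zero_col:
  assumes M: "M \<in> carrier_mat q q" and inv: "invertible_mat M"
    and i: "i < q" and j: "j < q" "j \<noteq> 0" "s j = 1"
  shows "Ehat q c M s \<epsilon> \<theta> $$ (i,j) = 0"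
proof -
  define X where "X = cmat M * mat_diag q (\<lambda>i. shift_symbol (c i) \<theta>) * cmat (minv M)"
  have X: "X \<in> carrier_mat q q" using minv_props[OF M inv] M unfolding X_def
    by (intro mult_carrier_mat[of _ q q] cmat_carrier mat_diag_dim) auto
  have "Ehat q c M s \<epsilon> \<theta> = X * cmat (Kmat q s \<epsilon>)" by (simp add: Ehat_def X_def)
  also have "\<dots> $$ (i,j) = (\<Sum>k<q. X $$ (i,k) * cmat (Kmat q s \<epsilon>) $$ (k,j))"
    by (rule mat_mult_sum[OF X _ i j(1)]) simp
  also have "\<dots> = 0" using j i by (intro sum.neutral ballI) (simp add: Kmat_zero_col)
  finally show ?thesis .
qed

lemma shift_symbol_0[simp]: "shift_symbol c 0 = 1"
  by (simp add: shift_symbol_def)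

lemma Ehat_at0:
  assumes M: "M \<in> carrier_mat q q" and inv: "invertible_mat M"
  shows "Ehat q c M s \<epsilon> 0 = cmat (Kmat q s \<epsilon>)"
proof -
  have mi: "minv M \<in> carrier_mat q q" "M * minv M = 1\<^sub>m q" using minv_props[OF M inv] by auto
  have "Ehat q c M s \<epsilon> 0 = cmat M * 1\<^sub>m q * cmat (minv M) * cmat (Kmat q s \<epsilon>)"
    by (simp add: Ehat_def)
  also have "cmat M * 1\<^sub>m q = cmat M" using M by simp
  also have "cmat M * cmat (minv M) = cmat (M * minv M)" using cmat_mult[OF M mi(1)] by simp
  also have "\<dots> = 1\<^sub>m q" using mi by simp
  finally show ?thesis by (simp add: left_mult_one_mat')
qed

lemma Kmat_vec0:
  assumes eps: "\<epsilon> 0 = 1" and q: "0 < q" and v: "v \<in> carrier_vec q"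
  shows "(cmat (Kmat q s \<epsilon>) *\<^sub>v v) $ 0 = v $ 0"
proof -
  have "(cmat (Kmat q s \<epsilon>) *\<^sub>v v) $ 0 = (\<Sum>j<q. cmat (Kmat q s \<epsilon>) $$ (0,j) * v $ j)"
    by (rule mat_vec_sum[OF _ v q]) simp
  also have "\<dots> = (\<Sum>j<q. if j = 0 then v $ j else 0)"
    using eps q by (intro sum.cong) (auto simp: Kmat_row0)
  also have "\<dots> = v $ 0" using q by simp
  finally show ?thesis .
qed

lemma Kmat_pow_vec0:
  assumes eps: "\<epsilon> 0 = 1" and q: "0 < q"
  shows "v \<in> carrier_vec q \<Longrightarrow> (cmat (Kmat q s \<epsilon>) ^\<^sub>m n *\<^sub>v v) $ 0 = v $ 0"
proof (induct n arbitrary: v)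
  case 0 then show ?case by simp
next
  case (Suc n)
  have K: "cmat (Kmat q s \<epsilon>) \<in> carrier_mat q q" by simp
  have "cmat (Kmat q s \<epsilon>) ^\<^sub>m Suc n *\<^sub>v v = cmat (Kmat q s \<epsilon>) *\<^sub>v (cmat (Kmat q s \<epsilon>) ^\<^sub>m n *\<^sub>v v)"
    by (rule pow_mat_Suc_vec[OF K Suc.prems])
  also have "\<dots> $ 0 = (cmat (Kmat q s \<epsilon>) ^\<^sub>m n *\<^sub>v v) $ 0"
    by (rule Kmat_vec0[where \<epsilon>=\<epsilon> and q=q, OF eps q]) (metis K Suc.prems mult_mat_vec_carrier pow_carrier_mat)
  also have "\<dots> = v $ 0" by (rule Suc.hyps[OF Suc.prems])
  finally show ?case .
qed

lemma cont_entries_mult: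
  fixes F :: "'a::t2_space filter" and A B :: "'a \<Rightarrow> complex mat"
  assumes A: "\<And>x. A x \<in> carrier_mat nr n" and B: "\<And>x. B x \<in> carrier_mat n nc"
    and cA: "\<And>i j. i < nr \<Longrightarrow> j < n \<Longrightarrow> continuous F (\<lambda>x. A x $$ (i,j))"
    and cB: "\<And>i j. i < n \<Longrightarrow> j < nc \<Longrightarrow> continuous F (\<lambda>x. B x $$ (i,j))"
    and i: "i < nr" and j: "j < nc"
  shows "continuous F (\<lambda>x. (A x * B x) $$ (i,j))"
proof -
  have "(\<lambda>x. (A x * B x) $$ (i,j)) = (\<lambda>x. \<Sum>k<n. A x $$ (i,k) * B x $$ (k,j))"
    using mat_mult_sum[OF A B i j] by auto
  moreover have "continuous F (\<lambda>x. \<Sum>k<n. A x $$ (i,k) * B x $$ (k,j))"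
    by (rule continuous_sum, rule continuous_mult') (use cA cB i j in auto)
  ultimately show ?thesis by simp
qed

lemma shift_symbol_cont: "continuous (at x0) (\<lambda>x. shift_symbol c x)"
  unfolding shift_symbol_def cis_conv_exp by (intro continuous_intros)

lemma laurent_symbol_cont: "continuous (at x0) (\<lambda>x. laurent_symbol p x)"
  unfolding laurent_symbol_def by (intro continuous_intros shift_symbol_cont)

lemma Ehat_cont:
  assumes M: "M \<in> carrier_mat q q" and inv: "invertible_mat M" and i: "i < q" and j: "j < q"
  shows "continuous (at x0) (\<lambda>x. Ehat q c M s \<epsilon> x $$ (i,j))"
proof -
  have mi: "minv M \<in> carrier_mat q q" using minv_props[OF M inv] by auto
  have c0: "continuous (at x0) (\<lambda>x. mat_diag q (\<lambda>i. shift_symbol (c i) x) $$ (i,j))"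
    if "i < q" "j < q" for i j
    using that by (cases "i = j") (auto simp: mat_diag_def intro!: shift_symbol_cont)
  have c1: "continuous (at x0) (\<lambda>x. (cmat M * mat_diag q (\<lambda>i. shift_symbol (c i) x)) $$ (i,j))"
    if "i < q" "j < q" for i j
    by (rule cont_entries_mult[where nr=q and n=q and nc=q]) (use M that in \<open>auto intro: c0\<close>)
  have c2: "continuous (at x0) (\<lambda>x. (cmat M * mat_diag q (\<lambda>i. shift_symbol (c i) x) * cmat (minv M)) $$ (i,j))"
    if "i < q" "j < q" for i j
    by (rule cont_entries_mult[where nr=q and n=q and nc=q]) (use M mi that in \<open>auto intro: c1 intro!: mult_carrier_mat[of _ q q _ q] cmat_carrier\<close>)
  show ?thesis unfolding Ehat_def
    by (rule cont_entries_mult[where nr=q and n=q and nc=q]) (use M mi i j in \<open>auto intro: c2 intro!: mult_carrier_mat[of _ q q _ q] cmat_carrier simp del: index_mult_mat\<close>)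
qed

lemma Ehat_pow_cont:
  assumes M: "M \<in> carrier_mat q q" and inv: "invertible_mat M"
  shows "i < q \<Longrightarrow> j < q \<Longrightarrow> continuous (at x0) (\<lambda>x. (Ehat q c M s \<epsilon> x ^\<^sub>m n) $$ (i,j))"
proof (induct n arbitrary: i j)
  case 0
  have "\<And>x. dim_row (Ehat q c M s \<epsilon> x) = q" using Ehat_carrier[OF M inv] by (metis carrier_matD(1))
  then show ?case using 0 by simp
next
  case (Suc n)
  have pc: "\<And>x. Ehat q c M s \<epsilon> x ^\<^sub>m n \<in> carrier_mat q q" using Ehat_carrier[OF M inv] by (metis pow_carrier_mat)
  show ?case unfolding pow_mat.simps
    by (rule cont_entries_mult[where nr=q and n=q and nc=q]) (use Ehat_carrier[OF M inv] Suc pc in \<open>auto intro: Ehat_cont[OF M inv]\<close>)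
qed

lemma gstart_cont:
  assumes M: "M \<in> carrier_mat q q" and inv: "invertible_mat M" and q: "0 < q"
  shows "continuous (at x0) (\<lambda>x. gstart q c M s \<epsilon> w n x)"
proof -
  have "\<And>x. Ehat q c M s \<epsilon> x ^\<^sub>m n \<in> carrier_mat q q" using Ehat_carrier[OF M inv] by (metis pow_carrier_mat)
  have "(\<lambda>x. gstart q c M s \<epsilon> w n x) = (\<lambda>x. \<Sum>k<q. (Ehat q c M s \<epsilon> x ^\<^sub>m n) $$ (0,k) * what q w x $ k)"
    unfolding gstart_def using \<open>\<And>x. Ehat q c M s \<epsilon> x ^\<^sub>m n \<in> carrier_mat q q\<close> q
    by (intro ext mat_vec_sum) (auto simp: what_def)
  also have "\<dots> = (\<lambda>x. \<Sum>k<q. (Ehat q c M s \<epsilon> x ^\<^sub>m n) $$ (0,k) * laurent_symbol (w k) x)"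
    by (intro ext sum.cong) (auto simp: what_def)
  finally show ?thesis using q
    by (simp, intro continuous_sum continuous_mult' Ehat_pow_cont[OF M inv] laurent_symbol_cont) auto
qed

lemma gstart_at0:
  assumes M: "M \<in> carrier_mat q q" and inv: "invertible_mat M" and q: "0 < q" and eps: "\<epsilon> 0 = 1"
  shows "gstart q c M s \<epsilon> w n 0 = laurent_symbol (w 0) 0"
  unfolding gstart_def Ehat_at0[OF M inv]
  by (subst Kmat_pow_vec0[where \<epsilon>=\<epsilon> and q=q]) (auto simp: what_def q eps)



definition rvec :: "(nat \<Rightarrow> nat) \<Rightarrow> nat \<Rightarrow> complex vec \<Rightarrow> complex vec" where
  "rvec idx m v = vec m (\<lambda>k. v $ idx k)"

definition subm :: "(nat \<Rightarrow> nat) \<Rightarrow> nat \<Rightarrow> complex mat \<Rightarrow> complex mat" where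
  "subm idx m X = mat m m (\<lambda>(i,k). X $$ (idx i, idx k))"

lemma rvec_carrier[simp]: "rvec idx m v \<in> carrier_vec m" by (simp add: rvec_def)
lemma subm_carrier[simp]: "subm idx m X \<in> carrier_mat m m" by (simp add: subm_def)

lemma mv_restrict_sum:
  assumes X: "X \<in> carrier_mat n n" and v: "v \<in> carrier_vec n" and bij: "bij_betw idx {..<m} J"
    and J: "J \<subseteq> {..<n}"
    and zero: "\<And>i j. i < n \<Longrightarrow> j < n \<Longrightarrow> j \<notin> J \<Longrightarrow> X $$ (i,j) = 0" and i: "i < n"
  shows "(X *\<^sub>v v) $ i = (\<Sum>k<m. X $$ (i, idx k) * v $ idx k)"
proof -
  have "(X *\<^sub>v v) $ i = (\<Sum>j<n. X $$ (i,j) * v $ j)" by (rule mat_vec_sum[OF X v i])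
  also have "\<dots> = (\<Sum>j\<in>J. X $$ (i,j) * v $ j)"
    by (rule sum.mono_neutral_right) (use J zero i in auto)
  also have "\<dots> = (\<Sum>k<m. X $$ (i, idx k) * v $ idx k)"
    using sum.reindex_bij_betw[OF bij, of "\<lambda>j. X $$ (i,j) * v $ j"] by simp
  finally show ?thesis .
qed

lemma restrict_mult:
  assumes X: "X \<in> carrier_mat n n" and v: "v \<in> carrier_vec n" and bij: "bij_betw idx {..<m} J"
    and J: "J \<subseteq> {..<n}"
    and zero: "\<And>i j. i < n \<Longrightarrow> j < n \<Longrightarrow> j \<notin> J \<Longrightarrow> X $$ (i,j) = 0"
  shows "rvec idx m (X *\<^sub>v v) = subm idx m X *\<^sub>v rvec idx m v"
proof (rule eq_vecI)
  fix k assume "k < dim_vec (subm idx m X *\<^sub>v rvec idx m v)"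
  then have k: "k < m" by (simp add: subm_def)
  have ik: "idx k < n" using bij k J by (auto simp: bij_betw_def)
  have "rvec idx m (X *\<^sub>v v) $ k = (X *\<^sub>v v) $ idx k" using k by (simp add: rvec_def)
  also have "\<dots> = (\<Sum>j<m. X $$ (idx k, idx j) * v $ idx j)"
    by (rule mv_restrict_sum[OF X v bij J zero ik])
  also have "\<dots> = (\<Sum>j<m. subm idx m X $$ (k, j) * rvec idx m v $ j)"
    using k by (intro sum.cong) (auto simp: subm_def rvec_def)
  also have "\<dots> = (subm idx m X *\<^sub>v rvec idx m v) $ k"
    by (rule mat_vec_sum[symmetric]) (use k in auto)
  finally show "rvec idx m (X *\<^sub>v v) $ k = (subm idx m X *\<^sub>v rvec idx m v) $ k" .
qed (simp add: rvec_def subm_def)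

lemma restrict_pow:
  assumes X: "X \<in> carrier_mat n n" and bij: "bij_betw idx {..<m} J"
    and J: "J \<subseteq> {..<n}"
    and zero: "\<And>i j. i < n \<Longrightarrow> j < n \<Longrightarrow> j \<notin> J \<Longrightarrow> X $$ (i,j) = 0"
  shows "v \<in> carrier_vec n \<Longrightarrow> rvec idx m (X ^\<^sub>m p *\<^sub>v v) = subm idx m X ^\<^sub>m p *\<^sub>v rvec idx m v"
proof (induct p arbitrary: v)
  case 0
  have "X ^\<^sub>m 0 *\<^sub>v v = v" using X 0 by simp
  moreover have "subm idx m X ^\<^sub>m 0 *\<^sub>v rvec idx m v = rvec idx m v" by (simp add: subm_def)
  ultimately show ?case by simp
next
  case (Suc p)
  have Xp: "X ^\<^sub>m p \<in> carrier_mat n n" using X by simp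
  have Sp: "subm idx m X ^\<^sub>m p \<in> carrier_mat m m" by simp
  have Xv: "X *\<^sub>v v \<in> carrier_vec n" using X Suc.prems by simp
  have "X ^\<^sub>m Suc p *\<^sub>v v = X ^\<^sub>m p *\<^sub>v (X *\<^sub>v v)"
    by (simp, rule assoc_mult_mat_vec[OF Xp X Suc.prems])
  then have "rvec idx m (X ^\<^sub>m Suc p *\<^sub>v v) = subm idx m X ^\<^sub>m p *\<^sub>v rvec idx m (X *\<^sub>v v)"
    using Suc.hyps[OF Xv] by simp
  also have "\<dots> = subm idx m X ^\<^sub>m p *\<^sub>v (subm idx m X *\<^sub>v rvec idx m v)"
    using restrict_mult[OF X Suc.prems bij J zero] by simp
  also have "\<dots> = subm idx m X ^\<^sub>m Suc p *\<^sub>v rvec idx m v"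
    by (simp, rule assoc_mult_mat_vec[OF Sp subm_carrier rvec_carrier, symmetric])
  finally show ?case .
qed

lemma eig_restrict:
  assumes X: "X \<in> carrier_mat n n" and bij: "bij_betw idx {..<m} J"
    and J: "J \<subseteq> {..<n}"
    and zero: "\<And>i j. i < n \<Longrightarrow> j < n \<Longrightarrow> j \<notin> J \<Longrightarrow> X $$ (i,j) = 0"
    and ev: "eigenvalue X g" and g: "g \<noteq> 0"
  shows "eigenvalue (subm idx m X) g"
proof -
  obtain v where v: "v \<in> carrier_vec n" "v \<noteq> 0\<^sub>v n" "X *\<^sub>v v = g \<cdot>\<^sub>v v"
    using ev X unfolding eigenvalue_def eigenvector_def by auto
  have nz: "rvec idx m v \<noteq> 0\<^sub>v m"
  proof
    assume r0: "rvec idx m v = 0\<^sub>v m"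
    have vz: "v $ idx k = 0" if "k < m" for k
      using arg_cong[OF r0, of "\<lambda>u::complex vec. u $ k"] that by (simp add: rvec_def)
    have "v = 0\<^sub>v n"
    proof (rule eq_vecI)
      fix i assume "i < dim_vec (0\<^sub>v n :: complex vec)"
      then have i: "i < n" by simp
      have "g * v $ i = (X *\<^sub>v v) $ i" using v(3) i v(1) by simp
      also have "\<dots> = (\<Sum>k<m. X $$ (i, idx k) * v $ idx k)"
        by (rule mv_restrict_sum[OF X v(1) bij J zero i])
      also have "\<dots> = 0" using vz by simp
      finally show "v $ i = 0\<^sub>v n $ i" using g i by simp
    qed (use v in simp)
    with v(2) show False by simp
  qed
  have "subm idx m X *\<^sub>v rvec idx m v = rvec idx m (X *\<^sub>v v)"
    using restrict_mult[OF X v(1) bij J zero] by simp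
  also have "\<dots> = g \<cdot>\<^sub>v rvec idx m v"
  proof -
    have idxlt: "\<And>k. k < m \<Longrightarrow> idx k < n" using bij J by (auto simp: bij_betw_def)
    have dv: "dim_vec v = n" using v(1) by simp
    show ?thesis unfolding v(3) by (intro eq_vecI) (auto simp: rvec_def idxlt dv)
  qed
  finally have "eigenvector (subm idx m X) (rvec idx m v) g"
    using nz unfolding eigenvector_def by (simp add: subm_def)
  then show ?thesis unfolding eigenvalue_def by blast
qed

lemma Phihat_ev:
  assumes M: "M \<in> carrier_mat q q" and inv: "invertible_mat M"
    and ph: "Phihat q c M s \<epsilon> z \<theta> = 0" and z: "z \<noteq> 0"
  shows "eigenvalue (Ehat q c M s \<epsilon> \<theta>) z"
proof -
  let ?E = "Ehat q c M s \<epsilon> \<theta>"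
  have E: "?E \<in> carrier_mat q q" by (rule Ehat_carrier[OF M inv])
  have d0: "det (z \<cdot>\<^sub>m 1\<^sub>m q - ?E) = 0" using ph z unfolding Phihat_def by simp
  have "z \<cdot>\<^sub>m 1\<^sub>m q - ?E = - char_matrix ?E z"
    using E by (intro eq_matI) (auto simp: char_matrix_def)
  then have "det (- char_matrix ?E z) = 0" using d0 by simp
  then have "det (char_matrix ?E z) = 0" using det_0_negate[of "char_matrix ?E z" q] E by simp
  then show ?thesis using eigenvalue_det[OF E] by simp
qed

lemma Bdd_tendsto:
  assumes "(f \<longlongrightarrow> (L::complex)) F" shows "Bdd F f"
proof -
  have "eventually (\<lambda>x. dist (f x) L < 1) F" using assms by (rule tendstoD) simp
  then have "eventually (\<lambda>x. norm (f x) \<le> norm L + 1) F"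
  proof eventually_elim
    case (elim x)
    have "norm (f x) \<le> norm L + norm (f x - L)" by (rule norm_triangle_sub)
    with elim show ?case by (simp add: dist_norm)
  qed
  then show ?thesis unfolding Bdd_def by blast
qed

lemma Sm_exp:
  assumes S: "Sm F r a" and lim: "(a \<longlongrightarrow> 0) F"
  shows "Sm F r (\<lambda>x. exp (a x) - 1)"
proof -
  from S obtain C where C: "eventually (\<lambda>x. norm (a x) \<le> C * r x) F" by (auto simp: Sm_def)
  have "eventually (\<lambda>x. dist (a x) 0 < 1/2) F" using lim by (rule tendstoD) simp
  with C have "eventually (\<lambda>x. norm (exp (a x) - 1) \<le> (3/2 * C) * r x) F"
  proof eventually_elim
    case (elim x)
    then have "norm (a x) \<le> 1/2" by simp
    then have "norm (exp (a x) - 1) \<le> 3/2 * norm (a x)" by (rule norm_exp_bounds(2))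
    with elim(1) show ?case by simp
  qed
  then show ?thesis unfolding Sm_def by blast
qed



theorem proposition3:
  fixes q Q H :: nat
    and c :: "nat \<Rightarrow> int^'d"
    and M :: "real mat"
    and s \<epsilon> :: "nat \<Rightarrow> real"
    and w :: "nat \<Rightarrow> int^'d \<Rightarrow> real"
    and g1 :: "real^'d \<Rightarrow> complex"
  assumes q_pos: "q \<ge> 1"
    and M_dim: "M \<in> carrier_mat q q"
    and M_inv: "invertible_mat M"
    and s_range: "\<And>i. 1 \<le> i \<Longrightarrow> i < q \<Longrightarrow> 0 < s i \<and> s i \<le> 2"
    and eps1: "\<epsilon> 0 = 1"
    and w_laurent: "\<And>i. i < q \<Longrightarrow> finite {k. w i k \<noteq> 0}"
    and Q_def: "Q = Qnum q s"
    and H_pos: "H \<ge> 1"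
    and g1_root: "\<forall>\<^sub>F \<theta> in at 0. Phihat q c M s \<epsilon> (g1 \<theta>) \<theta> = 0"
    and g1_consistent: "(\<lambda>\<theta>. g1 \<theta> - 1) \<in> O[at 0](\<lambda>\<theta>. complex_of_real (norm \<theta>))"
    and w1_hyp: "(\<lambda>\<theta>. laurent_symbol (w 0) \<theta> - 1)
                   \<in> O[at 0](\<lambda>\<theta>. complex_of_real (norm \<theta> ^ (H + 1)))"
    and start_hyp: "\<And>n. 1 \<le> n \<Longrightarrow> n \<le> Q \<Longrightarrow>
        (\<lambda>\<theta>. Ln (gstart q c M s \<epsilon> w n \<theta>) - of_nat n * Ln (g1 \<theta>))
          \<in> O[at 0](\<lambda>\<theta>. complex_of_real (norm \<theta> ^ (H + 1)))"
  shows "\<forall>n > Q. (\<lambda>\<theta>. gstart q c M s \<epsilon> w n \<theta> - g1 \<theta> ^ n)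
                   \<in> O[at 0](\<lambda>\<theta>. complex_of_real (norm \<theta> ^ (H + 1)))"
proof -
  define r where "r = (\<lambda>\<theta>::real^'d. norm \<theta> ^ (H + 1))"
  define G where "G = (\<lambda>\<theta> n. gstart q c M s \<epsilon> w n \<theta>)"
  define E where "E = Ehat q c M s \<epsilon>"
  have q0: "0 < q" using q_pos by simp
  have Ec: "\<And>\<theta>. E \<theta> \<in> carrier_mat q q" unfolding E_def by (rule Ehat_carrier[OF M_dim M_inv])
  have r0: "\<And>\<theta>. r \<theta> \<ge> 0" by (simp add: r_def)
  have rlim: "(r \<longlongrightarrow> 0) (at 0)"
  proof -
    have "((\<lambda>\<theta>::real^'d. norm \<theta>) \<longlongrightarrow> norm (0::real^'d)) (at 0)"
      by (intro tendsto_intros)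
    then have "((\<lambda>\<theta>::real^'d. norm \<theta> ^ (H + 1)) \<longlongrightarrow> norm (0::real^'d) ^ (H + 1)) (at 0)"
      by (intro tendsto_intros)
    then show ?thesis by (simp add: r_def)
  qed
  have hyp_iff: "\<And>f. f \<in> O[at 0](\<lambda>\<theta>. complex_of_real (norm \<theta> ^ (H + 1))) \<longleftrightarrow> Sm (at 0) r f"
    unfolding r_def by (rule Sm_iff_bigo) simp

  have "Sm (at 0) norm (\<lambda>\<theta>. g1 \<theta> - 1)"
    using g1_consistent Sm_iff_bigo[of norm "\<lambda>\<theta>. g1 \<theta> - 1" "at 0"] by simp
  then have "((\<lambda>\<theta>. g1 \<theta> - 1) \<longlongrightarrow> 0) (at (0::real^'d))"
    by (rule Sm_tendsto[rotated]) (use tendsto_norm_zero[OF tendsto_ident_at[of "0::real^'d" UNIV]] in auto)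
  then have g1lim: "(g1 \<longlongrightarrow> 1) (at 0)" by (simp add: Lim_null[of g1 1])
  have g1ne: "eventually (\<lambda>\<theta>. g1 \<theta> \<noteq> 0) (at 0)"
    by (rule tendsto_imp_eventually_ne[OF g1lim]) simp
  have g1B: "Bdd (at 0) g1" by (rule Bdd_tendsto[OF g1lim])

  have Sw: "Sm (at 0) r (\<lambda>\<theta>. laurent_symbol (w 0) \<theta> - 1)" using w1_hyp hyp_iff by simp
  have "((\<lambda>\<theta>. laurent_symbol (w 0) \<theta> - 1) \<longlongrightarrow> 0) (at 0)"
    by (rule Sm_tendsto[OF r0 Sw rlim])
  then have wlim: "((\<lambda>\<theta>. laurent_symbol (w 0) \<theta>) \<longlongrightarrow> 1) (at 0)"
    by (simp add: Lim_null[of "\<lambda>\<theta>. laurent_symbol (w 0) \<theta>" 1])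
  have "((\<lambda>\<theta>. laurent_symbol (w 0) \<theta>) \<longlongrightarrow> laurent_symbol (w 0) 0) (at 0)"
    using laurent_symbol_cont[of 0 "w 0"] by (simp add: isCont_def)
  then have w00: "laurent_symbol (w 0) 0 = 1"
    using wlim tendsto_unique[of "at (0::real^'d)"] by auto
  have G0: "\<And>n. G 0 n = 1"
  proof -
    fix n
    have "G 0 n = laurent_symbol (w 0) 0" unfolding G_def
      by (rule gstart_at0[where \<epsilon>=\<epsilon>, OF M_dim M_inv q0 eps1])
    then show "G 0 n = 1" using w00 by simp
  qed
  have Glim: "\<And>n. ((\<lambda>\<theta>. G \<theta> n) \<longlongrightarrow> 1) (at 0)"
  proof -
    fix n
    have "isCont (\<lambda>\<theta>. G \<theta> n) 0" unfolding G_def by (rule gstart_cont[OF M_dim M_inv q0])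
    then show "((\<lambda>\<theta>. G \<theta> n) \<longlongrightarrow> 1) (at 0)" using G0 by (simp add: isCont_def)
  qed

  define d where "d = (\<lambda>\<theta> n. G \<theta> n - g1 \<theta> ^ n)"
  have what_c: "\<And>\<theta>. what q w \<theta> \<in> carrier_vec q" by (simp add: what_def)
  have d_init: "Sm (at 0) r (\<lambda>\<theta>. d \<theta> n)" if n: "n \<le> Q" for n
  proof (cases "n = 0")
    case True
    have "\<And>\<theta>. G \<theta> 0 = laurent_symbol (w 0) \<theta>"
    proof -
      fix \<theta>
      have "dim_row (Ehat q c M s \<epsilon> \<theta>) = q" using Ec[of \<theta>] unfolding E_def by simp
      then show "G \<theta> 0 = laurent_symbol (w 0) \<theta>"
        unfolding G_def gstart_def using what_c[of \<theta>] q0 by (simp add: what_def)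
    qed
    then show ?thesis using Sw True by (simp add: d_def)
  next
    case False
    define a where "a = (\<lambda>\<theta>. Ln (G \<theta> n) - of_nat n * Ln (g1 \<theta>))"
    define b where "b = (\<lambda>\<theta>. of_nat n * Ln (g1 \<theta>))"
    have Sa: "Sm (at 0) r a" using start_hyp[of n] False n hyp_iff unfolding a_def G_def by simp
    have alim: "(a \<longlongrightarrow> 0) (at 0)" by (rule Sm_tendsto[OF r0 Sa rlim])
    have "(b \<longlongrightarrow> of_nat n * Ln 1) (at 0)" unfolding b_def
      by (intro tendsto_intros g1lim) simp
    then have blim: "((\<lambda>\<theta>. exp (b \<theta>)) \<longlongrightarrow> exp 0) (at 0)"
      by (intro tendsto_intros) simp
    have Gne: "eventually (\<lambda>\<theta>. G \<theta> n \<noteq> 0) (at 0)"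
      by (rule tendsto_imp_eventually_ne[OF Glim]) simp
    have ev: "eventually (\<lambda>\<theta>. exp (b \<theta>) * (exp (a \<theta>) - 1) = d \<theta> n) (at 0)"
      using Gne g1ne
    proof eventually_elim
      case (elim \<theta>)
      have e1: "exp (b \<theta>) * (exp (a \<theta>) - 1) = exp (b \<theta> + a \<theta>) - exp (b \<theta>)"
        by (simp add: exp_add algebra_simps)
      have "b \<theta> + a \<theta> = Ln (G \<theta> n)" by (simp add: a_def b_def)
      then have ea: "exp (b \<theta> + a \<theta>) = G \<theta> n" using elim by simp
      have eb: "exp (b \<theta>) = g1 \<theta> ^ n" unfolding b_def exp_of_nat_mult using elim by simp
      show ?case using e1 ea eb by (simp add: d_def)
    qed
    show ?thesis
      by (rule Sm_cong[OF ev], rule Sm_mult[OF Bdd_tendsto[OF blim] Sm_exp[OF Sa alim]])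
  qed

  define bb where "bb = (\<Sum>i<q. \<Sum>j<q. norm (E 0 $$ (i,j)) + 1)"
  have Ebdd: "eventually (\<lambda>\<theta>. \<forall>i\<in>{..<q}. \<forall>j\<in>{..<q}. norm (E \<theta> $$ (i,j)) \<le> bb) (at 0)"
  proof (intro eventually_ball_finite ballI finite_lessThan)
    fix i j assume i: "i \<in> {..<q}" and j: "j \<in> {..<q}"
    have "isCont (\<lambda>\<theta>. E \<theta> $$ (i,j)) 0" unfolding E_def
      by (rule Ehat_cont[OF M_dim M_inv]) (use i j in auto)
    then have "((\<lambda>\<theta>. E \<theta> $$ (i,j)) \<longlongrightarrow> E 0 $$ (i,j)) (at 0)" by (simp add: isCont_def)
    then have "eventually (\<lambda>\<theta>. dist (E \<theta> $$ (i,j)) (E 0 $$ (i,j)) < 1) (at 0)"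
      by (rule tendstoD) simp
    moreover have "norm (E 0 $$ (i,j)) + 1 \<le> bb"
    proof -
      have "norm (E 0 $$ (i,j)) + 1 \<le> (\<Sum>j<q. norm (E 0 $$ (i,j)) + 1)"
        using j by (intro member_le_sum[of j "{..<q}" "\<lambda>j. norm (E 0 $$ (i,j)) + 1"]) auto
      also have "\<dots> \<le> bb" unfolding bb_def
        using i by (intro member_le_sum[of i "{..<q}"]) (auto intro!: add_nonneg_nonneg sum_nonneg)
      finally show ?thesis .
    qed
    ultimately show "eventually (\<lambda>\<theta>. norm (E \<theta> $$ (i,j)) \<le> bb) (at 0)"
    proof (elim eventually_mono)
      fix \<theta> assume "dist (E \<theta> $$ (i,j)) (E 0 $$ (i,j)) < 1" "norm (E 0 $$ (i,j)) + 1 \<le> bb"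
      moreover have "norm (E \<theta> $$ (i,j)) \<le> norm (E 0 $$ (i,j)) + norm (E \<theta> $$ (i,j) - E 0 $$ (i,j))"
        by (rule norm_triangle_sub)
      ultimately show "norm (E \<theta> $$ (i,j)) \<le> bb" by (simp add: dist_norm)
    qed
  qed

  define good where "good = (\<lambda>\<theta>. Phihat q c M s \<epsilon> (g1 \<theta>) \<theta> = 0 \<and> g1 \<theta> \<noteq> 0 \<and>
      (\<forall>i\<in>{..<q}. \<forall>j\<in>{..<q}. norm (E \<theta> $$ (i,j)) \<le> bb))"
  have ev_good: "eventually good (at 0)"
    using g1_root g1ne Ebdd unfolding good_def by eventually_elim auto

  define J where "J = {i. i < q \<and> (i = 0 \<or> s i \<noteq> 1)}"
  define L where "L = sorted_list_of_set J"
  define idx where "idx = (\<lambda>k. L ! k)"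
  have finJ: "finite J" unfolding J_def by simp
  have J_eq: "J = insert 0 {i. 1 \<le> i \<and> i < q \<and> s i \<noteq> 1}" unfolding J_def using q0 by auto
  have cardJ: "card J = Q + 1" unfolding J_eq Q_def Qnum_def by (subst card_insert_disjoint) auto
  have setL: "set L = J" and distL: "distinct L" and sortL: "sorted L" and lenL: "length L = Q + 1"
    unfolding L_def using finJ cardJ by auto
  have bij: "bij_betw idx {..<Q+1} J"
    unfolding idx_def using bij_betw_nth[OF distL, of "{..<Q+1}" J] lenL setL by auto
  have JJ: "J \<subseteq> {..<q}" unfolding J_def by auto
  have idx0: "idx 0 = 0"
  proof -
    have "0 \<in> set L" using setL q0 by (simp add: J_def)
    then obtain k where k: "k < length L" "L ! k = 0" by (auto simp: in_set_conv_nth)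
    have "L ! 0 \<le> L ! k" by (rule sorted_nth_mono[OF sortL _ k(1)]) simp
    then show ?thesis using k by (simp add: idx_def)
  qed
  have zero: "\<And>\<theta> i j. i < q \<Longrightarrow> j < q \<Longrightarrow> j \<notin> J \<Longrightarrow> E \<theta> $$ (i,j) = 0"
    unfolding E_def J_def by (rule Ehat_zero_col[OF M_dim M_inv]) auto

  define A where "A = (\<lambda>\<theta>. subm idx (Q+1) (E \<theta>))"
  define x0 where "x0 = (\<lambda>\<theta>. rvec idx (Q+1) (what q w \<theta>))"
  have Ac: "\<And>\<theta>. A \<theta> \<in> carrier_mat (Q+1) (Q+1)" by (simp add: A_def)
  have x0c: "\<And>\<theta>. x0 \<theta> \<in> carrier_vec (Q+1)" by (simp add: x0_def)
  have G_A: "\<And>\<theta> p. G \<theta> p = (A \<theta> ^\<^sub>m p *\<^sub>v x0 \<theta>) $ 0"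
  proof -
    fix \<theta> p
    have "(A \<theta> ^\<^sub>m p *\<^sub>v x0 \<theta>) = rvec idx (Q+1) (E \<theta> ^\<^sub>m p *\<^sub>v what q w \<theta>)"
      unfolding A_def x0_def
    proof (rule restrict_pow[OF Ec[of \<theta>] bij JJ _ what_c, symmetric])
      show "\<And>i j. i < q \<Longrightarrow> j < q \<Longrightarrow> j \<notin> J \<Longrightarrow> E \<theta> $$ (i,j) = 0" using zero by blast
    qed
    also have "\<dots> $ 0 = (E \<theta> ^\<^sub>m p *\<^sub>v what q w \<theta>) $ 0" by (simp add: rvec_def idx0)
    finally show "G \<theta> p = (A \<theta> ^\<^sub>m p *\<^sub>v x0 \<theta>) $ 0" by (simp add: G_def gstart_def E_def)
  qed

  define BB where "BB = real (Q+1) * bb"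
  have key: "\<exists>es. good \<theta> \<longrightarrow> (length es = Q \<and> (\<forall>e\<in>set es. norm e \<le> BB)
      \<and> Dl (g1 \<theta> # es) (G \<theta>) = (\<lambda>_. 0))" for \<theta>
  proof (cases "good \<theta>")
    case True
    then have ph: "Phihat q c M s \<epsilon> (g1 \<theta>) \<theta> = 0" and gn: "g1 \<theta> \<noteq> 0"
      and bd: "\<And>i j. i < q \<Longrightarrow> j < q \<Longrightarrow> norm (E \<theta> $$ (i,j)) \<le> bb" unfolding good_def by auto
    have evE: "eigenvalue (E \<theta>) (g1 \<theta>)" unfolding E_def by (rule Phihat_ev[OF M_dim M_inv ph gn])
    have z: "\<And>i j. i < q \<Longrightarrow> j < q \<Longrightarrow> j \<notin> J \<Longrightarrow> E \<theta> $$ (i,j) = 0" using zero by blast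
    have evA: "eigenvalue (A \<theta>) (g1 \<theta>)" unfolding A_def
      by (rule eig_restrict[OF Ec[of \<theta>] bij JJ z evE gn])
    obtain es where cp: "char_poly (A \<theta>) = (\<Prod>a\<leftarrow>g1 \<theta> # es. [:- a, 1:])"
      and les: "length es = Q + 1 - 1" and eves: "\<forall>e\<in>set es. eigenvalue (A \<theta>) e"
      using char_poly_with_ev[OF Ac evA] by blast
    have idxlt: "\<And>k. k < Q + 1 \<Longrightarrow> idx k < q" using bij JJ by (auto simp: bij_betw_def)
    have bA: "\<And>i j. i < Q+1 \<Longrightarrow> j < Q+1 \<Longrightarrow> norm (A \<theta> $$ (i,j)) \<le> bb"
      by (simp add: A_def subm_def idxlt bd)
    have "\<forall>e\<in>set es. norm e \<le> BB"
      using eves eigen_bound[OF Ac _ bA] unfolding BB_def by auto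
    moreover have "Dl (g1 \<theta> # es) (G \<theta>) = (\<lambda>_. 0)"
    proof -
      have Geq: "G \<theta> = (\<lambda>n. (A \<theta> ^\<^sub>m n *\<^sub>v x0 \<theta>) $ 0)" using G_A by auto
      show ?thesis unfolding Geq by (rule annih_general[OF Ac[of \<theta>] cp x0c[of \<theta>]]) simp
    qed
    ultimately show ?thesis using les by auto
  qed simp
  then obtain lam where lam: "\<And>\<theta>. good \<theta> \<Longrightarrow> length (lam \<theta>) = Q \<and> (\<forall>e\<in>set (lam \<theta>). norm e \<le> BB)
      \<and> Dl (g1 \<theta> # lam \<theta>) (G \<theta>) = (\<lambda>_. 0)"
    by metis

  define ls where "ls = map (\<lambda>i \<theta>. lam \<theta> ! i) [0..<Q]"
  have lenls: "length ls = Q" by (simp add: ls_def)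
  have lsB: "\<forall>l\<in>set ls. Bdd (at 0) l"
  proof
    fix l assume "l \<in> set ls"
    then obtain i where i: "i < Q" and l: "l = (\<lambda>\<theta>. lam \<theta> ! i)" by (auto simp: ls_def)
    have "eventually (\<lambda>\<theta>. norm (l \<theta>) \<le> BB) (at 0)"
      using ev_good
    proof eventually_elim
      case (elim \<theta>)
      then show ?case using lam[OF elim] i l by auto
    qed
    then show "Bdd (at 0) l" unfolding Bdd_def by blast
  qed
  have DFls: "DF ls f \<theta> = Dl (lam \<theta>) (f \<theta>)" if "length (lam \<theta>) = Q" for f \<theta>
  proof -
    have "map (\<lambda>l. l \<theta>) ls = map (\<lambda>i. lam \<theta> ! i) [0..<length (lam \<theta>)]"
      using that by (simp add: ls_def)
    also have "\<dots> = lam \<theta>" by (rule map_nth)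
    finally show ?thesis by (simp add: DF_def)
  qed
  define e where "e = DF ls d"
  have e_rec: "eventually (\<lambda>\<theta>. e \<theta> (Suc p) = g1 \<theta> * e \<theta> p) (at 0)" for p
    using ev_good
  proof eventually_elim
    case (elim \<theta>)
    note l = lam[OF elim]
    have geo: "Dl (g1 \<theta> # lam \<theta>) (\<lambda>n. g1 \<theta> ^ n) = (\<lambda>_. 0)"
      by (simp add: Dop_Dl Dop_geom)
    have "Dop (g1 \<theta>) (e \<theta>) = Dl (g1 \<theta> # lam \<theta>) (d \<theta>)"
      unfolding e_def DFls[OF conjunct1[OF l]] by simp
    also have "\<dots> = (\<lambda>_. 0)" unfolding d_def Dl_diff using l geo by simp
    finally have "Dop (g1 \<theta>) (e \<theta>) p = 0" by simp
    then show ?case by (simp add: Dop_def)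
  qed
  have e0: "Sm (at 0) r (\<lambda>\<theta>. e \<theta> 0)"
    unfolding e_def by (rule DF_forward[where N=0, OF lsB]) (use d_init lenls in auto)
  have eall: "Sm (at 0) r (\<lambda>\<theta>. e \<theta> p)" for p
  proof (induct p)
    case 0 then show ?case by (rule e0)
  next
    case (Suc p)
    have "Sm (at 0) r (\<lambda>\<theta>. g1 \<theta> * e \<theta> p)" by (rule Sm_mult[OF g1B Suc])
    then show ?case by (rule Sm_cong[rotated]) (use e_rec[of p] in \<open>auto elim: eventually_mono\<close>)
  qed
  have dall: "Sm (at 0) r (\<lambda>\<theta>. d \<theta> p)" for p
    by (rule DF_backward[OF lsB]) (use eall d_init lenls in \<open>auto simp: e_def\<close>)
  show ?thesis
  proof (intro allI impI)
    fix n assume "n > Q"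
    show "(\<lambda>\<theta>. gstart q c M s \<epsilon> w n \<theta> - g1 \<theta> ^ n)
                   \<in> O[at 0](\<lambda>\<theta>. complex_of_real (norm \<theta> ^ (H + 1)))"
      using dall[of n] hyp_iff by (simp add: d_def G_def)
  qed
qed

end
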